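(* Let $M \neq \{0\}$ be a semiideal of $\mathbb{N}_0$ of period $d$. Then the quotient $\mathbb{N}_0/M$ is isomorphic to $\mathbb{Z}/(d)$ (as $\mathbb{N}_0$-semimodules, i.e. commutative monoids).
   Context: $\mathbb{N}_0$ is the semiring of natural numbers including $0$. A semiideal of $\mathbb{N}_0$ is a nonempty subset closed under addition and multiplication by elements of $\mathbb{N}_0$. For a semiideal $M\neq 0$, a difference of $M$ is an element $e \in \mathbb{N}$ with $x+e=y$ for some $x,y\in M$, $x\neq 0$; the period of $M$ is the minimal difference. $\mathbb{N}_0/M$ denotes the set of equivalence classes of the congruence relation $n \sim_M n' \iff \exists a, b \in M: n + a = n' + b$, with addition $\bar n + \bar n' = \overline{n+n'}$. $\mathbb{Z}/(d)$ is regarded as a commutative monoid under addition. *)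

theory Defs
  imports Main
begin

definition semiideal :: "nat set \<Rightarrow> bool" where
  "semiideal M \<longleftrightarrow> M \<noteq> {} \<and> (\<forall>x\<in>M. \<forall>y\<in>M. x + y \<in> M) \<and> (\<forall>r. \<forall>x\<in>M. r * x \<in> M)"

definition is_difference :: "nat set \<Rightarrow> nat \<Rightarrow> bool" where
  "is_difference M e \<longleftrightarrow> e \<ge> 1 \<and> (\<exists>x\<in>M. \<exists>y\<in>M. x \<noteq> 0 \<and> x + e = y)"

definition period :: "nat set \<Rightarrow> nat" where
  "period M = (LEAST e. is_difference M e)"

definition semi_cong :: "nat set \<Rightarrow> (nat \<times> nat) set" where
  "semi_cong M = {(n, n'). \<exists>a\<in>M. \<exists>b\<in>M. n + a = n' + b}"

definition quot_classes :: "nat set \<Rightarrow> nat set set" where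
  "quot_classes M = UNIV // semi_cong M"

definition cls :: "nat set \<Rightarrow> nat \<Rightarrow> nat set" where
  "cls M n = semi_cong M `` {n}"

text \<open>Isomorphism of the commutative monoid N_0/M (addition of classes by
  representatives) with Z/(d), the latter represented by {0..<d} with addition mod d.\<close>
definition quot_iso_Zmod :: "nat set \<Rightarrow> nat \<Rightarrow> (nat set \<Rightarrow> nat) \<Rightarrow> bool" where
  "quot_iso_Zmod M d f \<longleftrightarrow>
     bij_betw f (quot_classes M) {0..<d} \<and>
     f (cls M 0) = 0 \<and>
     (\<forall>n n'. f (cls M (n + n')) = (f (cls M n) + f (cls M n')) mod d)"

end

theory Submission
  imports Defs
begin

theorem theorem4p13:
  fixes M :: "nat set"
  assumes "semiideal M" and "M \<noteq> {0}"
  shows "\<exists>f. quot_iso_Zmod M (period M) f"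
proof -
  have add: "\<And>x y. x \<in> M \<Longrightarrow> y \<in> M \<Longrightarrow> x + y \<in> M"
    and mul: "\<And>r x. x \<in> M \<Longrightarrow> r * x \<in> M" and ne: "M \<noteq> {}"
    using assms(1) unfolding semiideal_def by auto
  obtain m where m: "m \<in> M" "m \<noteq> 0" using ne assms(2) by (metis insertI1 subsetI subset_singletonD)
  have "is_difference M m" unfolding is_difference_def
    using m add[OF m(1) m(1)] by auto
  then have dd: "is_difference M (period M)" unfolding period_def by (rule LeastI)
  define d where "d = period M"
  have dmin: "\<And>e. is_difference M e \<Longrightarrow> d \<le> e" unfolding d_def period_def
    by (rule Least_le)
  obtain x where x: "x \<in> M" "x \<noteq> 0" "x + d \<in> M" "d \<ge> 1"
    using dd unfolding is_difference_def d_def by auto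
  have comb: "\<And>k j. j \<le> k \<Longrightarrow> k * x + j * d \<in> M"
  proof -
    fix k j :: nat assume "j \<le> k"
    then have "k * x + j * d = (k - j) * x + j * (x + d)"
      by (simp add: algebra_simps)
    then show "k * x + j * d \<in> M" using add mul x by simp
  qed
  have dvd: "\<And>y. y \<in> M \<Longrightarrow> d dvd y"
  proof (rule ccontr)
    fix y assume y: "y \<in> M" "\<not> d dvd y"
    define N where "N = Suc (y div d)"
    have y1: "N * x + y \<in> M" using add mul x y by simp
    have y2: "N * x + (y div d) * d \<in> M" using comb[of "y div d" N] N_def by simp
    have pos: "N * x + (y div d) * d \<noteq> 0" using x N_def by simp
    have "N * x + (y div d) * d + y mod d = N * x + y" by simp
    then have "is_difference M (y mod d)"
    proof -
      have "y mod d \<noteq> 0" using y(2) by (simp add: dvd_eq_mod_eq_0)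
      then show ?thesis using y1 y2 pos \<open>N * x + (y div d) * d + y mod d = N * x + y\<close>
        unfolding is_difference_def
        by (intro conjI bexI[of _ "N * x + (y div d) * d"] bexI[of _ "N * x + y"]) auto
    qed
    then have "d \<le> y mod d" by (rule dmin)
    moreover have "y mod d < d" using x(4) by simp
    ultimately show False by simp
  qed
  obtain q where q: "x = q * d" using dvd x(1) by (metis dvd_def mult.commute)
  have q1: "q \<ge> 1" using q x(2) by (cases q) auto
  have big: "\<And>n. q * q \<le> n \<Longrightarrow> n * d \<in> M"
  proof -
    fix n assume n: "q * q \<le> n"
    have "q * q div q \<le> n div q" using n by (rule div_le_mono)
    then have "q \<le> n div q" using q1 by simp
    moreover have "n mod q < q" using q1 by simp
    ultimately have "n mod q \<le> n div q" by simp
    then have "(n div q) * x + (n mod q) * d \<in> M" by (rule comb)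
    moreover have "(n div q) * x + (n mod q) * d = n * d"
    proof -
      have "(n div q) * x + (n mod q) * d = (n div q * q + n mod q) * d"
        unfolding q distrib_right by (simp only: ac_simps)
      also have "n div q * q + n mod q = n" by (rule div_mult_mod_eq)
      finally show ?thesis .
    qed
    ultimately show "n * d \<in> M" by simp
  qed
  have cong: "\<And>n n'. (n, n') \<in> semi_cong M \<longleftrightarrow> n mod d = n' mod d"
  proof -
    fix n n'
    have A: "(\<exists>a\<in>M. \<exists>b\<in>M. n + a = n' + b)" if "n mod d = n' mod d" "n \<le> n'" for n n'
    proof -
      have "d dvd n' - n" using mod_eq_dvd_iff_nat[OF that(2), of d] that(1) by argo
      then obtain t where "n' - n = t * d" by (auto simp: dvd_def mult.commute)
      then have t: "n' = n + t * d" using that(2) by simp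
      show ?thesis using big[of "q*q + t"] big[of "q*q"] t by (intro bexI[of _ "(q*q+t)*d"] bexI[of _ "(q*q)*d"]) (auto simp: algebra_simps)
    qed
    have B: "n mod d = n' mod d" if "n + a = n' + b" "a \<in> M" "b \<in> M" for a b
    proof -
      have "(n + a) mod d = n mod d" using dvd[OF that(2)] by (auto elim!: dvdE)
      moreover have "(n' + b) mod d = n' mod d" using dvd[OF that(3)] by (auto elim!: dvdE)
      ultimately show ?thesis using that(1) by simp
    qed
    show "(n, n') \<in> semi_cong M \<longleftrightarrow> n mod d = n' mod d"
    proof (cases "n \<le> n'")
      case True
      then show ?thesis using A[of n n'] B by (auto simp: semi_cong_def)
    next
      case False
      then have "n' \<le> n" by simp
      then show ?thesis using A[of n' n] B unfolding semi_cong_def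
        by (auto simp: add.commute) (metis add.commute)
    qed
  qed
  have clsE: "\<And>n. cls M n = {k. k mod d = n mod d}" unfolding cls_def using cong by auto
  define f where "f C = (SOME k. k \<in> C) mod d" for C
  have fcls: "f (cls M n) = n mod d" for n
  proof -
    have "n \<in> cls M n" using clsE by simp
    then have "(SOME k. k \<in> cls M n) \<in> cls M n" by (rule someI)
    then show ?thesis unfolding f_def clsE by simp
  qed
  have qc: "quot_classes M = range (cls M)" unfolding quot_classes_def cls_def quotient_def by auto
  have "bij_betw f (quot_classes M) {0..<d}"
    unfolding bij_betw_def qc
  proof
    show "inj_on f (range (cls M))"
    proof (rule inj_onI)
      fix A B assume "A \<in> range (cls M)" "B \<in> range (cls M)" "f A = f B"
      then obtain a b where "A = cls M a" "B = cls M b" "a mod d = b mod d" by (auto simp: fcls)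
      then show "A = B" by (simp add: clsE)
    qed
    have "f ` range (cls M) = (\<lambda>n. n mod d) ` UNIV" by (auto simp: fcls image_iff)
    also have "\<dots> = {0..<d}" using x(4)
      by (auto simp: image_iff) (metis mod_less)
    finally show "f ` range (cls M) = {0..<d}" .
  qed
  then have "quot_iso_Zmod M d f" unfolding quot_iso_Zmod_def
    by (simp add: fcls mod_add_eq)
  then show ?thesis unfolding d_def by blast
qed

end
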